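(* Let $(\Sigma,\mathsf{ar})$ be an at most countable binding signature with associated functors $F,F_\alpha$ and maps $a^{(n)}$. For every $n$, the commuting square formed by $F^n(!):F^{n+1}1\to F^n1$, $a^{(n)}:F^n1\to F_\alpha^n1$, $a^{(n+1)}:F^{n+1}1\to F_\alpha^{n+1}1$ and $F_\alpha^n(!):F_\alpha^{n+1}1\to F_\alpha^n1$ is a safe square.
   Context: Nominal sets over a countably infinite set $\mathcal V$ of names; $[\mathcal V]X$ the name-abstraction with classes $\langle x\rangle u$. Binding signature: symbols $\mathsf{op}\in\Sigma$ with arities finite lists $(n_1,\dots,n_k)$. $F_\alpha X=\mathcal V+\coprod_{\mathsf{op}}\prod_i[\mathcal V]^{n_i}X$, $FX=\mathcal V+\coprod_{\mathsf{op}}\prod_i(\mathcal V^{n_i}\times X)$, $q_X:FX\to F_\alpha X$ identity on $\mathcal V$ and $(x^1,\dots,x^n,u)\mapsto\langle x^1\rangle\cdots\langle x^n\rangle u$ on factors. $1=\{*\}$, $!$ the unique map to $1$; $a^{(0)}=\mathrm{id}_1$, $a^{(n+1)}=q_{F_\alpha^n1}\circ F(a^{(n)})$. For equivariant $f$: $u$ is $f$-safe if $|\mathsf{supp}(u)|=\max\{|\mathsf{supp}(v)|:v\in f^{-1}(f(u))\}$; $\mathsf{bv}_f(u)=\mathsf{supp}(u)\setminus\mathsf{supp}(f(u))$. A commuting square $p:Z\to X$, $f:X\to W$, $g:Z\to Y$, $q:Y\to W$ ($f\circ p=q\circ g$) is a safe square if for every $f$-safe $u\in X$ and $v\in Y$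 with $f(u)=q(v)$ and $\mathsf{bv}_f(u)\cap\mathsf{supp}(v)=\emptyset$ there is a $g$-safe $z\in Z$ with $p(z)=u$, $g(z)=v$. *)

theory Defs
  imports "HOL-Library.Countable_Set"
begin

text \<open>Names: the countably infinite set V is modelled by the type nat.
Raw terms: Star is the element of 1, Var x a name, and Op s args an operation
symbol applied to a list of (binder list, subterm) pairs.\<close>

datatype 'o rtm = Star | Var nat | Op 'o "(nat list \<times> 'o rtm) list"

definition swp :: "nat \<Rightarrow> nat \<Rightarrow> nat \<Rightarrow> nat" where
  "swp a b = (\<lambda>c. if c = a then b else if c = b then a else c)"

primrec rperm :: "(nat \<Rightarrow> nat) \<Rightarrow> 'o rtm \<Rightarrow> 'o rtm" where
  "rperm f Star = Star"
| "rperm f (Var x) = Var (f x)"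
| "rperm f (Op s as) = Op s (map (map_prod (map f) (rperm f)) as)"

definition nsupp :: "('x \<Rightarrow> 'x \<Rightarrow> bool) \<Rightarrow> ((nat \<Rightarrow> nat) \<Rightarrow> 'x \<Rightarrow> 'x) \<Rightarrow> 'x \<Rightarrow> nat set" where
  "nsupp E perm x = {a. infinite {b. \<not> E (perm (swp a b) x) x}}"

definition gsupp :: "((nat \<Rightarrow> nat) \<Rightarrow> 'x \<Rightarrow> 'x) \<Rightarrow> 'x \<Rightarrow> nat set" where
  "gsupp perm x = nsupp (=) perm x"

definition aperm :: "(nat \<Rightarrow> nat) \<Rightarrow> nat list \<times> 'o rtm \<Rightarrow> nat list \<times> 'o rtm" where
  "aperm f p = (map f (fst p), rperm f (snd p))"

text \<open>Equality in the iterated abstraction [V]^k X of the elements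
  <xs_1>...<xs_k>[t] and <ys_1>...<ys_k>[s], given equality R on X:
  <a>u = <b>v iff (a = b and u = v) or (b fresh for u and (a b).u = v).\<close>
primrec abs_eq_k :: "nat \<Rightarrow> ('o rtm \<Rightarrow> 'o rtm \<Rightarrow> bool)
    \<Rightarrow> nat list \<times> 'o rtm \<Rightarrow> nat list \<times> 'o rtm \<Rightarrow> bool" where
  "abs_eq_k 0 R p q = (fst p = [] \<and> fst q = [] \<and> R (snd p) (snd q))"
| "abs_eq_k (Suc k) R p q =
     (case (fst p, fst q) of
        (x # xs, y # ys) \<Rightarrow>
          (x = y \<and> abs_eq_k k R (xs, snd p) (ys, snd q))
          \<or> (y \<notin> nsupp (abs_eq_k k R) aperm (xs, snd p)
             \<and> abs_eq_k k R (aperm (swp x y) (xs, snd p)) (ys, snd q))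
      | _ \<Rightarrow> False)"

text \<open>Equality in F_alpha^n 1 of the images of two raw terms.\<close>
primrec aeq :: "nat \<Rightarrow> 'o rtm \<Rightarrow> 'o rtm \<Rightarrow> bool" where
  "aeq 0 t u = (t = Star \<and> u = Star)"
| "aeq (Suc n) t u =
     (case t of
        Star \<Rightarrow> False
      | Var x \<Rightarrow> u = Var x
      | Op s as \<Rightarrow> (case u of
            Op s2 bs \<Rightarrow> s = s2 \<and> list_all2 (\<lambda>p q. abs_eq_k (length (fst p)) (aeq n) p q) as bs
          | _ \<Rightarrow> False))"

text \<open>Elements of F^n 1 for the signature (Sig, ar).\<close>
primrec wf :: "'o set \<Rightarrow> ('o \<Rightarrow> nat list) \<Rightarrow> nat \<Rightarrow> 'o rtm \<Rightarrow> bool" where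
  "wf S ar 0 t = (t = Star)"
| "wf S ar (Suc n) t =
     (case t of
        Star \<Rightarrow> False
      | Var x \<Rightarrow> True
      | Op s as \<Rightarrow> s \<in> S \<and> map (length \<circ> fst) as = ar s \<and> (\<forall>p\<in>set as. wf S ar n (snd p)))"

definition Fset :: "'o set \<Rightarrow> ('o \<Rightarrow> nat list) \<Rightarrow> nat \<Rightarrow> 'o rtm set" where
  "Fset S ar n = {t. wf S ar n t}"

text \<open>a^(n) : F^n 1 \<rightarrow> F_alpha^n 1, elements of F_alpha^n 1 being the classes.\<close>
definition acls :: "'o set \<Rightarrow> ('o \<Rightarrow> nat list) \<Rightarrow> nat \<Rightarrow> 'o rtm \<Rightarrow> 'o rtm set" where
  "acls S ar n t = {u. wf S ar n u \<and> aeq n t u}"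

definition Faset :: "'o set \<Rightarrow> ('o \<Rightarrow> nat list) \<Rightarrow> nat \<Rightarrow> 'o rtm set set" where
  "Faset S ar n = acls S ar n ` Fset S ar n"

text \<open>F^n(!) : F^(n+1) 1 \<rightarrow> F^n 1 is truncation at depth n.\<close>
primrec trunc :: "nat \<Rightarrow> 'o rtm \<Rightarrow> 'o rtm" where
  "trunc 0 t = Star"
| "trunc (Suc n) t = (case t of Op s as \<Rightarrow> Op s (map (\<lambda>(xs, r). (xs, trunc n r)) as) | _ \<Rightarrow> t)"

text \<open>F_alpha^n(!) : F_alpha^(n+1) 1 \<rightarrow> F_alpha^n 1, computed on a representative.\<close>
definition bangA :: "'o set \<Rightarrow> ('o \<Rightarrow> nat list) \<Rightarrow> nat \<Rightarrow> 'o rtm set \<Rightarrow> 'o rtm set" where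
  "bangA S ar n c = acls S ar n (trunc n (SOME t. t \<in> c))"

definition rsupp :: "'o rtm \<Rightarrow> nat set" where
  "rsupp t = gsupp rperm t"

definition csupp :: "'o rtm set \<Rightarrow> nat set" where
  "csupp c = gsupp (\<lambda>f c. rperm f ` c) c"

definition safe :: "'x set \<Rightarrow> ('x \<Rightarrow> nat set) \<Rightarrow> ('x \<Rightarrow> 'w) \<Rightarrow> 'x \<Rightarrow> bool" where
  "safe X sX f u = (u \<in> X \<and> (\<forall>v\<in>X. f v = f u \<longrightarrow> card (sX v) \<le> card (sX u)))"

definition safe_square ::
  "'z set \<Rightarrow> 'x set \<Rightarrow> 'y set \<Rightarrow> 'w set
   \<Rightarrow> ('z \<Rightarrow> nat set) \<Rightarrow> ('x \<Rightarrow> nat set) \<Rightarrow> ('y \<Rightarrow> nat set) \<Rightarrow> ('w \<Rightarrow> nat set)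
   \<Rightarrow> ('z \<Rightarrow> 'x) \<Rightarrow> ('x \<Rightarrow> 'w) \<Rightarrow> ('z \<Rightarrow> 'y) \<Rightarrow> ('y \<Rightarrow> 'w) \<Rightarrow> bool" where
  "safe_square Z X Y W sZ sX sY sW p f g q =
    ((\<forall>z\<in>Z. p z \<in> X \<and> g z \<in> Y \<and> f (p z) = q (g z))
     \<and> (\<forall>u\<in>X. \<forall>v\<in>Y. safe X sX f u \<and> f u = q v \<and> (sX u - sW (f u)) \<inter> sY v = {}
          \<longrightarrow> (\<exists>z\<in>Z. safe Z sZ g z \<and> p z = u \<and> g z = v)))"

end

theory Submission
  imports Defs
begin

datatype 'o dtm = DStar | DFree nat | DBnd nat | DOp 'o "(nat \<times> 'o dtm) list"

fun idx :: "nat list \<Rightarrow> nat \<Rightarrow> nat option" where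
  "idx [] x = None"
| "idx (y#ys) x = (if x = y then Some 0 else map_option Suc (idx ys x))"

fun db :: "nat list \<Rightarrow> 'o rtm \<Rightarrow> 'o dtm" where
  "db env Star = DStar"
| "db env (Var x) = (case idx env x of None \<Rightarrow> DFree x | Some i \<Rightarrow> DBnd i)"
| "db env (Op s as) = DOp s (map (\<lambda>p. (length (fst p), db (rev (fst p) @ env) (snd p))) as)"

fun dperm :: "(nat \<Rightarrow> nat) \<Rightarrow> 'o dtm \<Rightarrow> 'o dtm" where
  "dperm f DStar = DStar"
| "dperm f (DFree x) = DFree (f x)"
| "dperm f (DBnd i) = DBnd i"
| "dperm f (DOp s ds) = DOp s (map (\<lambda>p. (fst p, dperm f (snd p))) ds)"

fun frees :: "'o dtm \<Rightarrow> nat set" where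
  "frees (DFree x) = {x}"
| "frees (DOp s ds) = (\<Union>p\<in>set ds. frees (snd p))"
| "frees _ = {}"

fun absat :: "nat \<Rightarrow> nat \<Rightarrow> 'o dtm \<Rightarrow> 'o dtm" where
  "absat x L DStar = DStar"
| "absat x L (DFree y) = (if y = x then DBnd L else DFree y)"
| "absat x L (DBnd i) = DBnd i"
| "absat x L (DOp s ds) = DOp s (map (\<lambda>p. (fst p, absat x (L + fst p) (snd p))) ds)"

fun bndok :: "nat \<Rightarrow> 'o dtm \<Rightarrow> bool" where
  "bndok L (DBnd i) = (i < L)"
| "bndok L (DOp s ds) = (\<forall>p\<in>set ds. bndok (L + fst p) (snd p))"
| "bndok L _ = True"

fun nbd :: "'o dtm \<Rightarrow> nat" where
  "nbd (DOp s ds) = sum_list (map (\<lambda>p. fst p + nbd (snd p)) ds)"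
| "nbd _ = 0"

fun names :: "'o rtm \<Rightarrow> nat set" where
  "names Star = {}"
| "names (Var x) = {x}"
| "names (Op s as) = (\<Union>p\<in>set as. set (fst p) \<union> names (snd p))"

fun binders :: "'o rtm \<Rightarrow> nat list" where
  "binders (Op s as) = concat (map (\<lambda>p. fst p @ binders (snd p)) as)"
| "binders _ = []"

fun gen :: "nat \<Rightarrow> nat list \<Rightarrow> 'o dtm \<Rightarrow> 'o rtm"
and genl :: "nat \<Rightarrow> nat list \<Rightarrow> (nat \<times> 'o dtm) list \<Rightarrow> (nat list \<times> 'o rtm) list" where
  "gen c env DStar = Star"
| "gen c env (DFree x) = Var x"
| "gen c env (DBnd i) = Var (env ! i)"
| "gen c env (DOp s ds) = Op s (genl c env ds)"
| "genl c env [] = []"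
| "genl c env (p # ds) = ([c..<c + fst p], gen (c + fst p) (rev [c..<c + fst p] @ env) (snd p))
      # genl (c + fst p + nbd (snd p)) env ds"

fun graft :: "nat \<Rightarrow> nat list \<Rightarrow> 'o rtm \<Rightarrow> 'o dtm \<Rightarrow> 'o rtm"
and graftl :: "nat \<Rightarrow> nat list \<Rightarrow> (nat list \<times> 'o rtm) list \<Rightarrow> (nat \<times> 'o dtm) list \<Rightarrow> (nat list \<times> 'o rtm) list" where
  "graft c env Star d = gen c env d"
| "graft c env (Var x) d = Var x"
| "graft c env (Op s as) (DOp s' ds) = Op s (graftl c env as ds)"
| "graft c env (Op s as) _ = Op s as"
| "graftl c env (p # as) (q # ds) = (fst p, graft c (rev (fst p) @ env) (snd p) (snd q))
      # graftl (c + nbd (snd q)) env as ds"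
| "graftl c env _ _ = []"


lemma swp_inj: "inj (swp a b)"
  by (auto simp: inj_def swp_def split: if_splits)

lemma swp_swp[simp]: "swp a b (swp a b x) = x"
  by (auto simp: swp_def)

lemma idx_map: "inj f \<Longrightarrow> idx (map f env) (f x) = idx env x"
  by (induction env) (auto simp: inj_eq)

lemma db_perm: "inj f \<Longrightarrow> db (map f env) (rperm f t) = dperm f (db env t)"
proof (induction env t rule: db.induct)
  case (2 env x)
  then show ?case by (auto simp: idx_map split: option.splits)
next
  case (3 env s as)
  then show ?case by (auto simp: rev_map[symmetric])
qed auto

lemma idx_snoc: "idx (env @ [x]) y = (if y \<in> set env then idx env y else if y = x then Some (length env) else None)"
  by (induction env) auto

lemma idx_None: "idx env y = None \<longleftrightarrow> y \<notin> set env"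
  by (induction env) auto

lemma idx_Some: "idx env y = Some i \<Longrightarrow> i < length env \<and> env ! i = y"
  by (induction env arbitrary: i) (auto split: if_splits)

lemma idx_Some_set: "idx env y = Some i \<Longrightarrow> y \<in> set env"
  by (induction env arbitrary: i) (auto split: if_splits)

lemma db_snoc: "db (env @ [x]) t = absat x (length env) (db env t)"
proof (induction env t rule: db.induct)
  case (2 env y)
  then show ?case by (auto simp: idx_snoc idx_None dest: idx_Some_set split: option.splits)
next
  case (3 env s as)
  then show ?case by (auto simp: add.commute)
qed auto

lemma bndok_db: "bndok (length env) (db env t)"
  by (induction env t rule: db.induct) (auto dest: idx_Some split: option.splits simp: add.commute)

lemma bndok_dperm[simp]: "bndok L (dperm f d) = bndok L d"
  by (induction f d arbitrary: L rule: dperm.induct) auto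

lemma frees_absat[simp]: "frees (absat x L d) = frees d - {x}"
  by (induction x L d rule: absat.induct) auto

lemma frees_dperm[simp]: "frees (dperm f d) = f ` frees d"
  by (induction f d rule: dperm.induct) auto

lemma frees_finite[simp]: "finite (frees d)"
  by (induction d rule: frees.induct) auto

lemma absat_swap: "y \<notin> frees d \<Longrightarrow> absat y L (dperm (swp x y) d) = absat x L d"
  by (induction x L d rule: absat.induct) (auto simp: swp_def)

lemma map_eq_nth: "map f xs = map g ys \<longleftrightarrow> length xs = length ys \<and> (\<forall>i<length xs. f (xs!i) = g (ys!i))"
proof
  assume "map f xs = map g ys"
  then show "length xs = length ys \<and> (\<forall>i<length xs. f (xs!i) = g (ys!i))"
    by (metis length_map nth_map)
next
  assume "length xs = length ys \<and> (\<forall>i<length xs. f (xs!i) = g (ys!i))"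
  then show "map f xs = map g ys" by (intro nth_equalityI) auto
qed

lemma absat_inj: "bndok L d1 \<Longrightarrow> bndok L d2 \<Longrightarrow> absat x L d1 = absat x L d2 \<Longrightarrow> d1 = d2"
proof (induction x L d1 arbitrary: d2 rule: absat.induct)
  case (4 x L s ds)
  then obtain ds2 where d2: "d2 = DOp s ds2" by (cases d2) (auto split: if_splits)
  have len: "length ds = length ds2" using 4(4) d2 by (auto dest: map_eq_imp_length_eq)
  have "\<forall>i<length ds. ds ! i = ds2 ! i"
  proof (intro allI impI)
    fix i assume i: "i < length ds"
    have "map (\<lambda>p. (fst p, absat x (L + fst p) (snd p))) ds = map (\<lambda>p. (fst p, absat x (L + fst p) (snd p))) ds2" using 4(4) d2 by simp
    then have "map (\<lambda>p. (fst p, absat x (L + fst p) (snd p))) ds ! i = map (\<lambda>p. (fst p, absat x (L + fst p) (snd p))) ds2 ! i" by simp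
    then have e: "(fst (ds!i), absat x (L + fst (ds!i)) (snd (ds!i))) = (fst (ds2!i), absat x (L + fst (ds2!i)) (snd (ds2!i)))"
      using i len by (metis (no_types, lifting) nth_map)
    have m1: "ds!i \<in> set ds" "ds2!i \<in> set ds2" using i len by auto
    have b1: "bndok (L + fst (ds!i)) (snd (ds!i))" "bndok (L + fst (ds!i)) (snd (ds2!i))"
      using 4(2,3) d2 m1 e by auto
    have f: "fst (ds!i) = fst (ds2!i)" and e3: "absat x (L + fst (ds ! i)) (snd (ds ! i)) = absat x (L + fst (ds2 ! i)) (snd (ds2 ! i))" using e unfolding prod.inject by blast+
    have e2: "absat x (L + fst (ds!i)) (snd (ds!i)) = absat x (L + fst (ds!i)) (snd (ds2!i))" using e3 f by simp
    have "snd (ds!i) = snd (ds2!i)"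
      using 4(1)[OF m1(1) b1(1) b1(2) e2] .
    then show "ds ! i = ds2 ! i" using e by (simp add: prod_eq_iff)
  qed
  then show ?case using d2 len by (simp add: nth_equalityI)
next
  case (1 x L) then show ?case by (cases d2) (auto split: if_splits)
next
  case (2 x L y) then show ?case by (cases d2) (auto split: if_splits)
next
  case (3 x L i) then show ?case by (cases d2) (auto split: if_splits)
qed

lemma ABS: "bndok k d1 \<Longrightarrow> bndok k d2 \<Longrightarrow>
  absat x k d1 = absat y k d2 \<longleftrightarrow> (x = y \<and> d1 = d2) \<or> (y \<notin> frees d1 \<and> dperm (swp x y) d1 = d2)"
proof
  assume b: "bndok k d1" "bndok k d2" and e: "absat x k d1 = absat y k d2"
  show "(x = y \<and> d1 = d2) \<or> (y \<notin> frees d1 \<and> dperm (swp x y) d1 = d2)"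
  proof (cases "x = y")
    case True then show ?thesis using absat_inj b e by blast
  next
    case False
    have "y \<notin> frees (absat x k d1)" using e by simp
    then have y: "y \<notin> frees d1" using False by simp
    then have "absat y k (dperm (swp x y) d1) = absat y k d2" using e absat_swap by metis
    then have "dperm (swp x y) d1 = d2" using absat_inj[of k "dperm (swp x y) d1" d2 y] b by simp
    then show ?thesis using y by auto
  qed
next
  assume "bndok k d1" "bndok k d2" "(x = y \<and> d1 = d2) \<or> (y \<notin> frees d1 \<and> dperm (swp x y) d1 = d2)"
  then show "absat x k d1 = absat y k d2" using absat_swap by metis
qed

lemma dperm_id: "(\<forall>x\<in>frees d. f x = x) \<Longrightarrow> dperm f d = d"
  by (induction f d rule: dperm.induct) (auto simp: map_idI)

lemma map_idE: "map f xs = xs \<Longrightarrow> x \<in> set xs \<Longrightarrow> f x = x"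
  by (induction xs) auto

lemma dperm_neq: "a \<noteq> b \<Longrightarrow> a \<in> frees d \<Longrightarrow> dperm (swp a b) d \<noteq> d"
proof (induction d rule: frees.induct)
  case (1 x) then show ?case by (simp add: swp_def)
next
  case (2 s ds)
  then obtain p where p: "p \<in> set ds" "a \<in> frees (snd p)" by auto
  then have ne: "dperm (swp a b) (snd p) \<noteq> snd p" using 2 by blast
  show ?case
  proof
    assume "dperm (swp a b) (DOp s ds) = DOp s ds"
    then show False using ne p(1) map_idE[of "\<lambda>p. (fst p, dperm (swp a b) (snd p))" ds p]
      by (cases p) (simp only: dperm.simps dtm.inject fst_conv snd_conv prod.inject simp_thms, blast)
  qed
qed (simp_all)

lemma supp_lemma:
  fixes P :: "nat \<Rightarrow> bool"
  assumes "finite F" "\<And>b. b \<noteq> a \<Longrightarrow> b \<notin> F \<Longrightarrow> a \<in> F \<Longrightarrow> P b" "\<And>b. P b \<Longrightarrow> a \<notin> F \<Longrightarrow> b \<in> F"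
  shows "infinite {b. P b} \<longleftrightarrow> a \<in> F"
proof
  assume "infinite {b. P b}"
  show "a \<in> F"
  proof (rule ccontr)
    assume "a \<notin> F"
    then have "{b. P b} \<subseteq> F" using assms(3) by blast
    then show False using \<open>infinite {b. P b}\<close> assms(1) finite_subset by blast
  qed
next
  assume a: "a \<in> F"
  have "UNIV - insert a F \<subseteq> {b. P b}" using assms(2) a by blast
  moreover have "infinite (UNIV - insert a F :: nat set)" using assms(1) by simp
  ultimately show "infinite {b. P b}" using infinite_super by blast
qed

lemma dperm_fix_set: "infinite {b. dperm (swp a b) d \<noteq> d} \<longleftrightarrow> a \<in> frees d"
proof (rule supp_lemma[where P="\<lambda>b. dperm (swp a b) d \<noteq> d" and F="frees d" and a=a, OF frees_finite])
  fix b assume "b \<noteq> a" "b \<notin> frees d" "a \<in> frees d"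
  then show "dperm (swp a b) d \<noteq> d" using dperm_neq[of a b d] by simp
next
  fix b assume b: "dperm (swp a b) d \<noteq> d" "a \<notin> frees d"
  show "b \<in> frees d"
  proof (rule ccontr)
    assume "b \<notin> frees d"
    then have "\<forall>x\<in>frees d. swp a b x = x" using b(2) by (auto simp: swp_def)
    then show False using dperm_id[of d "swp a b"] b(1) by simp
  qed
qed

primrec okn :: "nat \<Rightarrow> 'o rtm \<Rightarrow> bool" where
  "okn 0 t = (t = Star)"
| "okn (Suc n) t = (case t of Star \<Rightarrow> False | Var x \<Rightarrow> True | Op s as \<Rightarrow> (\<forall>p\<in>set as. okn n (snd p)))"

lemma okn_perm: "okn n (rperm f t) = okn n t"
proof (induction n arbitrary: t)
  case 0 then show ?case by (cases t) auto
next
  case (Suc n) then show ?case by (cases t) auto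
qed

lemma nsupp_char:
  assumes "\<And>a b. E (aperm (swp a b) p) p \<longleftrightarrow> dperm (swp a b) d = d"
  shows "nsupp E aperm p = frees d"
  unfolding nsupp_def using assms by (simp add: dperm_fix_set)

lemma AK:
  assumes Peq: "\<And>f t. P (rperm f t) = P t"
  shows "abs_eq_k k (\<lambda>t s. P t \<and> P s \<and> db [] t = db [] s) (xs, t) (ys, s) \<longleftrightarrow>
     length xs = k \<and> length ys = k \<and> P t \<and> P s \<and> db (rev xs) t = db (rev ys) s"
proof (induction k arbitrary: xs t ys s)
  case 0
  then show ?case by auto
next
  case (Suc k)
  define R where "R = (\<lambda>t s. P t \<and> P s \<and> db [] t = db [] s)"
  define E where "E = abs_eq_k k R"
  have IH: "\<And>xs t ys s. E (xs, t) (ys, s) \<longleftrightarrow> length xs = k \<and> length ys = k \<and> P t \<and> P s \<and> db (rev xs) t = db (rev ys) s"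
    using Suc.IH unfolding E_def R_def by blast
  have dbp: "\<And>a b xs t. db (rev (map (swp a b) xs)) (rperm (swp a b) t) = dperm (swp a b) (db (rev xs) t)"
    by (metis db_perm rev_map swp_inj)
  show ?case
  proof (cases "xs = [] \<or> ys = []")
    case True
    then show ?thesis by (auto split: list.splits)
  next
    case False
    then obtain x xs' y ys' where xs: "xs = x # xs'" and ys: "ys = y # ys'"
      by (meson list.exhaust)
    have L: "abs_eq_k (Suc k) R (xs, t) (ys, s) \<longleftrightarrow>
      (x = y \<and> E (xs', t) (ys', s)) \<or> (y \<notin> nsupp E aperm (xs', t) \<and> E (map (swp x y) xs', rperm (swp x y) t) (ys', s))"
      unfolding xs ys E_def by (simp add: aperm_def)
    define d1 where "d1 = db (rev xs') t"
    define d2 where "d2 = db (rev ys') s"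
    have NS: "nsupp E aperm (xs', t) = frees d1" if "length xs' = k" "P t"
    proof (rule nsupp_char)
      fix a b
      show "E (aperm (swp a b) (xs', t)) (xs', t) \<longleftrightarrow> dperm (swp a b) d1 = d1"
        unfolding aperm_def fst_conv snd_conv IH using that Peq d1_def by (simp add: db_perm[OF swp_inj] rev_map)
    qed
    have "db (rev xs) t = db (rev ys) s \<longleftrightarrow> absat x (length (rev xs')) d1 = absat y (length (rev ys')) d2"
      unfolding xs ys d1_def d2_def by (simp add: db_snoc)
    then have R2: "length xs = Suc k \<and> length ys = Suc k \<and> P t \<and> P s \<and> db (rev xs) t = db (rev ys) s \<longleftrightarrow>
      length xs' = k \<and> length ys' = k \<and> P t \<and> P s \<and> ((x = y \<and> d1 = d2) \<or> (y \<notin> frees d1 \<and> dperm (swp x y) d1 = d2))"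
      using ABS[of k d1 d2 x y] bndok_db[of "rev xs'" t] bndok_db[of "rev ys'" s] unfolding xs ys d1_def d2_def
      by auto
    show ?thesis
      unfolding R_def[symmetric] L R2 IH using NS Peq d1_def d2_def by (auto simp: dbp)
  qed
qed

lemma list_all2_split: "list_all2 (\<lambda>p q. A p \<and> B q \<and> C p q) xs ys \<longleftrightarrow> list_all2 C xs ys \<and> (\<forall>p\<in>set xs. A p) \<and> (\<forall>q\<in>set ys. B q)"
proof (induction xs arbitrary: ys)
  case Nil then show ?case by auto
next
  case (Cons a xs) then show ?case by (cases ys) auto
qed

lemma map_eq_list_all2: "map f xs = map g ys \<longleftrightarrow> list_all2 (\<lambda>x y. f x = g y) xs ys"
proof (induction xs arbitrary: ys)
  case Nil then show ?case by auto
next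
  case (Cons a xs) then show ?case by (cases ys) auto
qed

lemma AQ: fixes t u :: "'o rtm" shows "aeq n t u \<longleftrightarrow> okn n t \<and> okn n u \<and> db [] t = db [] u"
proof (induction n arbitrary: t u)
  case 0 then show ?case by auto
next
  case (Suc n)
  have R: "aeq n = (\<lambda>(t::'o rtm) s. okn n t \<and> okn n s \<and> db [] t = db [] s)"
    by (intro ext) (rule Suc.IH)
  have AK': "abs_eq_k (length (fst p)) (aeq n) p q \<longleftrightarrow> okn n (snd p) \<and> okn n (snd q) \<and>
     (length (fst p), db (rev (fst p)) (snd p)) = (length (fst q), db (rev (fst q)) (snd q))" for p q :: "nat list \<times> 'o rtm"
    using AK[where P="okn n" and k="length (fst p)" and xs="fst p" and t="snd p" and ys="fst q" and s="snd q", OF okn_perm] unfolding R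
    by auto
  show ?case
  proof (cases t)
    case Star then show ?thesis by simp
  next
    case (Var x) then show ?thesis by (cases u) auto
  next
    case (Op s as)
    show ?thesis
    proof (cases u)
      case (Op s2 bs)
      have "aeq (Suc n) t u \<longleftrightarrow> s = s2 \<and> list_all2 (\<lambda>p q. okn n (snd p) \<and> okn n (snd q) \<and>
     (length (fst p), db (rev (fst p)) (snd p)) = (length (fst q), db (rev (fst q)) (snd q))) as bs"
      proof -
        have "(\<lambda>p::nat list \<times> 'o rtm. abs_eq_k (length (fst p)) (aeq n) p) = (\<lambda>p q. okn n (snd p) \<and> okn n (snd q) \<and>
     (length (fst p), db (rev (fst p)) (snd p)) = (length (fst q), db (rev (fst q)) (snd q)))"
          by (intro ext) (rule AK')
        then show ?thesis using \<open>t = _\<close> Op by simp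
      qed
      also have "\<dots> \<longleftrightarrow> okn (Suc n) t \<and> okn (Suc n) u \<and> db [] t = db [] u"
        unfolding list_all2_split using \<open>t = _\<close> Op by (auto simp: map_eq_list_all2)
      finally show ?thesis .
    qed (use \<open>t = _\<close> in auto)
  qed
qed

lemma wf_okn: "wf S ar n t \<Longrightarrow> okn n t"
proof (induction n arbitrary: t)
  case 0 then show ?case by simp
next
  case (Suc n) then show ?case by (cases t) auto
qed

lemma wf_perm: "wf S ar n (rperm f t) = wf S ar n t"
proof (induction n arbitrary: t)
  case 0 then show ?case by (cases t) auto
next
  case (Suc n) then show ?case by (cases t) (auto simp: comp_def)
qed

lemma acls_eq: "wf S ar n t \<Longrightarrow> acls S ar n t = {u. wf S ar n u \<and> db [] u = db [] t}"
  unfolding acls_def AQ using wf_okn[of S ar n t] wf_okn[of S ar n] by auto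

lemma acls_iff: "wf S ar n t \<Longrightarrow> wf S ar n t' \<Longrightarrow> acls S ar n t = acls S ar n t' \<longleftrightarrow> db [] t = db [] t'"
proof
  assume w: "wf S ar n t" "wf S ar n t'" and e: "acls S ar n t = acls S ar n t'"
  have "t \<in> acls S ar n t'" using e acls_eq[OF w(1)] w(1) by auto
  then show "db [] t = db [] t'" using acls_eq[OF w(2)] by auto
next
  assume w: "wf S ar n t" "wf S ar n t'" and e: "db [] t = db [] t'"
  then show "acls S ar n t = acls S ar n t'" using acls_eq[OF w(1)] acls_eq[OF w(2)] by simp
qed

fun dtrunc :: "nat \<Rightarrow> 'o dtm \<Rightarrow> 'o dtm" where
  "dtrunc 0 d = DStar"
| "dtrunc (Suc n) (DOp s ds) = DOp s (map (\<lambda>p. (fst p, dtrunc n (snd p))) ds)"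
| "dtrunc (Suc n) d = d"

lemma db_trunc: "db env (trunc n t) = dtrunc n (db env t)"
proof (induction n arbitrary: env t)
  case 0 then show ?case by simp
next
  case (Suc n)
  then show ?case by (cases t) (auto split: option.splits simp: case_prod_beta)
qed

lemma wf_trunc: "wf S ar (Suc n) t \<Longrightarrow> wf S ar n (trunc n t)"
proof (induction n arbitrary: t)
  case 0 then show ?case by simp
next
  case (Suc n) then show ?case by (cases t) (auto simp: case_prod_beta comp_def)
qed

lemma wf_refl: "wf S ar n t \<Longrightarrow> t \<in> acls S ar n t"
  using acls_eq by blast

lemma bangA_acls: "wf S ar (Suc n) z \<Longrightarrow> bangA S ar n (acls S ar (Suc n) z) = acls S ar n (trunc n z)"
proof -
  assume z: "wf S ar (Suc n) z"
  define t where "t = (SOME t. t \<in> acls S ar (Suc n) z)"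
  have "t \<in> acls S ar (Suc n) z" unfolding t_def using wf_refl[OF z] by (rule someI)
  then have t: "wf S ar (Suc n) t" "db [] t = db [] z" using acls_eq[OF z] by auto
  have "db [] (trunc n t) = db [] (trunc n z)" using t by (simp add: db_trunc)
  then show ?thesis unfolding bangA_def t_def[symmetric]
    using acls_iff[OF wf_trunc[OF t(1)] wf_trunc[OF z]] by simp
qed

lemma names_finite[simp]: "finite (names t)"
  by (induction t rule: names.induct) auto

lemma names_perm: "names (rperm f t) = f ` names t"
  by (induction t rule: names.induct) (auto simp: image_Un)

lemma rperm_id: "(\<forall>x\<in>names t. f x = x) \<Longrightarrow> rperm f t = t"
proof (induction t rule: names.induct)
  case (3 s as)
  have "map (map_prod (map f) (rperm f)) as = as"
  proof (rule map_idI)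
    fix p assume p: "p \<in> set as"
    then have "map f (fst p) = fst p" using 3(2) by (auto intro: map_idI)
    moreover have "rperm f (snd p) = snd p" using 3 p by auto
    ultimately show "map_prod (map f) (rperm f) p = p" by (cases p) auto
  qed
  then show ?case by simp
qed auto

lemma rsupp_names: "rsupp t = names t"
proof -
  have "infinite {b. rperm (swp a b) t \<noteq> t} \<longleftrightarrow> a \<in> names t" for a
  proof (rule supp_lemma[where P="\<lambda>b. rperm (swp a b) t \<noteq> t" and F="names t" and a=a, OF names_finite])
    fix b assume b: "b \<noteq> a" "b \<notin> names t" "a \<in> names t"
    have "swp a b a \<in> swp a b ` names t" using b(3) by (rule imageI)
    then have "b \<in> names (rperm (swp a b) t)" unfolding names_perm by (simp add: swp_def)
    then show "rperm (swp a b) t \<noteq> t" using b(2) by auto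
  next
    fix b assume b: "rperm (swp a b) t \<noteq> t" "a \<notin> names t"
    show "b \<in> names t"
    proof (rule ccontr)
      assume "b \<notin> names t"
      then have "\<forall>x\<in>names t. swp a b x = x" using b(2) by (auto simp: swp_def)
      then show False using rperm_id[of t "swp a b"] b(1) by simp
    qed
  qed
  then show ?thesis unfolding rsupp_def gsupp_def nsupp_def by simp
qed


lemma rperm_comp: "rperm f (rperm g t) = rperm (f \<circ> g) t"
  by (induction t rule: names.induct) auto

lemma rperm_invol[simp]: "rperm (swp a b) (rperm (swp a b) t) = t"
  unfolding rperm_comp by (rule rperm_id) (simp add: swp_def)

lemma dperm_comp: "dperm f (dperm g d) = dperm (f \<circ> g) d"
  by (induction g d rule: dperm.induct) auto

lemma dperm_invol[simp]: "dperm (swp a b) (dperm (swp a b) d) = d"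
  unfolding dperm_comp by (rule dperm_id) (simp add: swp_def)

lemma db_perm0: "db [] (rperm (swp a b) t) = dperm (swp a b) (db [] t)"
  using db_perm[where f="swp a b" and env="[]"] swp_inj by simp

lemma image_acls: "wf S ar n t \<Longrightarrow> rperm (swp a b) ` acls S ar n t = acls S ar n (rperm (swp a b) t)"
proof -
  assume t: "wf S ar n t"
  have t': "wf S ar n (rperm (swp a b) t)" by (simp add: wf_perm t)
  have "u \<in> rperm (swp a b) ` acls S ar n t \<longleftrightarrow> u \<in> acls S ar n (rperm (swp a b) t)" for u
  proof
    assume "u \<in> rperm (swp a b) ` acls S ar n t"
    then obtain v where v: "v \<in> acls S ar n t" "u = rperm (swp a b) v" by blast
    then show "u \<in> acls S ar n (rperm (swp a b) t)"
      using acls_eq[OF t] acls_eq[OF t'] by (simp add: wf_perm db_perm0)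
  next
    assume u: "u \<in> acls S ar n (rperm (swp a b) t)"
    have "rperm (swp a b) u \<in> acls S ar n t"
      using u acls_eq[OF t] acls_eq[OF t'] by (simp add: wf_perm db_perm0)
    moreover have "u = rperm (swp a b) (rperm (swp a b) u)" by simp
    ultimately show "u \<in> rperm (swp a b) ` acls S ar n t" by blast
  qed
  then show ?thesis by blast
qed

lemma csupp_acls: "wf S ar n t \<Longrightarrow> csupp (acls S ar n t) = frees (db [] t)"
proof -
  assume t: "wf S ar n t"
  have "rperm (swp a b) ` acls S ar n t = acls S ar n t \<longleftrightarrow> dperm (swp a b) (db [] t) = db [] t" for a b
    unfolding image_acls[OF t] using acls_iff[OF iffD2[OF wf_perm t] t]
    by (simp add: db_perm0)
  then show ?thesis unfolding csupp_def gsupp_def nsupp_def by (simp add: dperm_fix_set)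
qed

lemma names_sub: "names t \<subseteq> frees (db env t) \<union> set env \<union> set (binders t)"
proof (induction env t rule: db.induct)
  case (2 env x) then show ?case by (auto dest: idx_Some_set simp: idx_None split: option.splits)
next
  case (3 env s as)
  show ?case
  proof
    fix x assume "x \<in> names (Op s as)"
    then obtain p where p: "p \<in> set as" "x \<in> set (fst p) \<union> names (snd p)" by auto
    have "x \<in> frees (db (rev (fst p) @ env) (snd p)) \<union> set (rev (fst p) @ env) \<union> set (binders (snd p)) \<or> x \<in> set (fst p)"
      using 3[OF p(1)] p(2) by blast
    then show "x \<in> frees (db env (Op s as)) \<union> set env \<union> set (binders (Op s as))"
      using p(1) by force
  qed
qed auto

lemma frees_sub: "frees (db env t) \<subseteq> names t"
  by (induction env t rule: db.induct) (auto split: option.splits)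

lemma binders_sub: "set (binders t) \<subseteq> names t"
  by (induction t rule: binders.induct) auto

lemma binders_len: "length (binders t) = nbd (db env t)"
proof (induction env t rule: db.induct)
  case (3 env s as)
  then show ?case by (simp add: length_concat comp_def) (metis (no_types, lifting) map_eq_conv)
qed (auto split: option.splits)

lemma names_eq: "names t = frees (db [] t) \<union> set (binders t)"
  using names_sub[of t "[]"] frees_sub[of "[]" t] binders_sub[of t] by auto

lemma card_bound: "card (names t) \<le> card (frees (db [] t)) + nbd (db [] t)"
proof -
  have "card (names t) \<le> card (frees (db [] t)) + card (set (binders t))"
    unfolding names_eq by (rule card_Un_le)
  also have "\<dots> \<le> card (frees (db [] t)) + nbd (db [] t)"
    using card_length[of "binders t"] binders_len[of t "[]"] by simp
  finally show ?thesis .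
qed

lemma good_card: "distinct (binders t) \<Longrightarrow> set (binders t) \<inter> frees (db [] t) = {} \<Longrightarrow>
   card (names t) = card (frees (db [] t)) + nbd (db [] t)"
  unfolding names_eq binders_len[of t "[]", symmetric]
  by (simp add: card_Un_disjoint Int_commute distinct_card)

lemma card_good: "card (names t) \<ge> card (frees (db [] t)) + nbd (db [] t) \<Longrightarrow>
   distinct (binders t) \<and> set (binders t) \<inter> frees (db [] t) = {}"
proof -
  assume c: "card (names t) \<ge> card (frees (db [] t)) + nbd (db [] t)"
  let ?F = "frees (db [] t)" and ?B = "set (binders t)"
  have fin: "finite ?F" "finite ?B" by auto
  have 1: "card (?F \<union> ?B) + card (?F \<inter> ?B) = card ?F + card ?B" using card_Un_Int[OF fin] by simp
  have 2: "card ?B \<le> length (binders t)" by (rule card_length)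
  have 3: "card (?F \<union> ?B) \<ge> card ?F + length (binders t)"
    using c names_eq[of t] binders_len[of t "[]"] by simp
  have "card ?B = length (binders t)" using 1 2 3 by linarith
  moreover have "card (?F \<inter> ?B) = 0" using 1 2 3 by linarith
  ultimately show ?thesis using fin card_distinct by (auto simp: Int_commute)
qed

primrec wfD :: "'o set \<Rightarrow> ('o \<Rightarrow> nat list) \<Rightarrow> nat \<Rightarrow> 'o dtm \<Rightarrow> bool" where
  "wfD S ar 0 d = (d = DStar)"
| "wfD S ar (Suc n) d = (case d of DStar \<Rightarrow> False
     | DOp s ds \<Rightarrow> s \<in> S \<and> map fst ds = ar s \<and> (\<forall>p\<in>set ds. wfD S ar n (snd p)) | _ \<Rightarrow> True)"

lemma wf_wfD: "wf S ar n t \<Longrightarrow> wfD S ar n (db env t)"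
proof (induction n arbitrary: env t)
  case 0 then show ?case by simp
next
  case (Suc n) then show ?case by (cases t) (auto split: option.splits simp: comp_def)
qed

lemma upt_app3: "[a..<a+m] @ [a+m..<a+m+k] = [a..<a+m+k]"
  by (metis le_add1 upt_add_eq_append)

lemma gen_binders:
  fixes d :: "'o dtm" and ds :: "(nat \<times> 'o dtm) list"
  shows "binders (gen c env d) = [c..<c + nbd d]"
  "concat (map (\<lambda>p. fst p @ binders (snd p)) (genl c env ds)) = [c..<c + sum_list (map (\<lambda>p. fst p + nbd (snd p)) ds)]"
proof (induction c env d and c env ds rule: gen_genl.induct)
  case (6 c env p ds)
  then show ?case using upt_app3[of c "fst p" "nbd (snd p)"]
    upt_app3[of c "fst p + nbd (snd p)" "sum_list (map (\<lambda>p. fst p + nbd (snd p)) ds)"]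
    by (simp add: add.assoc)
qed auto

lemma idx_nth: "distinct env \<Longrightarrow> i < length env \<Longrightarrow> idx env (env ! i) = Some i"
proof (induction env arbitrary: i)
  case (Cons a env) then show ?case by (cases i) auto
qed simp

lemma gen_db:
  fixes d :: "'o dtm" and ds :: "(nat \<times> 'o dtm) list"
  shows "distinct env \<Longrightarrow> bndok (length env) d \<Longrightarrow> (\<forall>x\<in>set env. x < c) \<Longrightarrow> (\<forall>x\<in>frees d. x < c \<and> x \<notin> set env)
     \<Longrightarrow> db env (gen c env d) = d"
  "distinct env \<Longrightarrow> (\<forall>p\<in>set ds. bndok (length env + fst p) (snd p)) \<Longrightarrow> (\<forall>x\<in>set env. x < c)
     \<Longrightarrow> (\<forall>p\<in>set ds. \<forall>x\<in>frees (snd p). x < c \<and> x \<notin> set env)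
     \<Longrightarrow> map (\<lambda>p. (length (fst p), db (rev (fst p) @ env) (snd p))) (genl c env ds) = ds"
proof (induction c env d and c env ds rule: gen_genl.induct)
  case (2 c env x) then show ?case by (simp add: idx_None[THEN iffD2])
next
  case (3 c env i) then show ?case by (simp add: idx_nth)
next
  case (6 c env p ds)
  have a: "db (rev [c..<c + fst p] @ env) (gen (c + fst p) (rev [c..<c + fst p] @ env) (snd p)) = snd p"
  proof (rule 6(1))
    show "distinct (rev [c..<c + fst p] @ env)" using 6(3,5) by auto
    show "bndok (length (rev [c..<c + fst p] @ env)) (snd p)" using 6(4) by (simp add: add.commute)
    show "\<forall>x\<in>set (rev [c..<c + fst p] @ env). x < c + fst p" using 6(5) by auto
    show "\<forall>x\<in>frees (snd p). x < c + fst p \<and> x \<notin> set (rev [c..<c + fst p] @ env)" using 6(6) by auto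
  qed
  have b: "map (\<lambda>p. (length (fst p), db (rev (fst p) @ env) (snd p))) (genl (c + fst p + nbd (snd p)) env ds) = ds"
  proof (rule 6(2)[OF 6(3)])
    show "\<forall>p\<in>set ds. bndok (length env + fst p) (snd p)" using 6(4) by simp
    show "\<forall>x\<in>set env. x < c + fst p + nbd (snd p)" using 6(5) by (auto simp: trans_less_add1)
    show "\<forall>pa\<in>set ds. \<forall>x\<in>frees (snd pa). x < c + fst p + nbd (snd p) \<and> x \<notin> set env"
      using 6(6) by (auto simp: trans_less_add1)
  qed
  show ?case using a b by simp
qed auto

lemma genl_len: "map (length \<circ> fst) (genl c env ds) = map fst ds"
  by (induction ds arbitrary: c) auto

lemma gen_wf:
  fixes d :: "'o dtm" and ds :: "(nat \<times> 'o dtm) list"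
  shows "wfD S ar m d \<Longrightarrow> wf S ar m (gen c env d)"
  "(\<forall>p\<in>set ds. wfD S ar m (snd p)) \<Longrightarrow> (\<forall>p\<in>set (genl c env ds). wf S ar m (snd p))"
proof (induction c env d and c env ds arbitrary: m and m rule: gen_genl.induct)
  case (1 c env) then show ?case by (cases m) auto
next
  case (2 c env x) then show ?case by (cases m) auto
next
  case (3 c env i) then show ?case by (cases m) auto
next
  case (4 c env s ds)
  then obtain m' where m: "m = Suc m'" by (cases m) auto
  then show ?case using 4 by (auto simp: genl_len)
qed auto


lemma graft_trunc:
  fixes u :: "'o rtm" and d :: "'o dtm" and as :: "(nat list \<times> 'o rtm) list" and ds :: "(nat \<times> 'o dtm) list"
  shows "wf S ar m u \<Longrightarrow> dtrunc m d = db env u \<Longrightarrow> trunc m (graft c env u d) = u"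
  and "(\<forall>p\<in>set as. wf S ar m (snd p)) \<Longrightarrow>
    map (\<lambda>p. (length (fst p), db (rev (fst p) @ env) (snd p))) as = map (\<lambda>q. (fst q, dtrunc m (snd q))) ds \<Longrightarrow>
    map (\<lambda>p. (fst p, trunc m (snd p))) (graftl c env as ds) = as"
proof (induction c env u d and c env as ds arbitrary: m and m rule: graft_graftl.induct)
  case (1 c env d) then show ?case by (cases m) auto
next
  case (2 c env x d) then show ?case by (cases m) auto
next
  case (3 c env s as s' ds)
  then obtain m' where m: "m = Suc m'" by (cases m) auto
  have "map (\<lambda>p. (fst p, trunc m' (snd p))) (graftl c env as ds) = as"
    using 3 m by (intro 3(1)) auto
  then show ?case using m by (simp add: split_def)
next
  case ("4_1" c env s as) then show ?case by (cases m) auto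
next
  case ("4_2" c env s as x) then show ?case by (cases m) auto
next
  case ("4_3" c env s as x) then show ?case by (cases m) auto
next
  case (5 c env p as q ds)
  have h: "trunc m (graft c (rev (fst p) @ env) (snd p) (snd q)) = snd p"
    using 5 by (intro 5(1)) auto
  have t: "map (\<lambda>p. (fst p, trunc m (snd p))) (graftl (c + nbd (snd q)) env as ds) = as"
    using 5 by (intro 5(2)) auto
  show ?case using h t by simp
qed auto

lemma graft_wf:
  fixes u :: "'o rtm" and d :: "'o dtm" and as :: "(nat list \<times> 'o rtm) list" and ds :: "(nat \<times> 'o dtm) list"
  shows "wf S ar m u \<Longrightarrow> wfD S ar (Suc m) d \<Longrightarrow> dtrunc m d = db env u \<Longrightarrow> wf S ar (Suc m) (graft c env u d)"
  and "(\<forall>p\<in>set as. wf S ar m (snd p)) \<Longrightarrow> (\<forall>q\<in>set ds. wfD S ar (Suc m) (snd q)) \<Longrightarrow>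
    map (\<lambda>p. (length (fst p), db (rev (fst p) @ env) (snd p))) as = map (\<lambda>q. (fst q, dtrunc m (snd q))) ds \<Longrightarrow>
    (\<forall>p\<in>set (graftl c env as ds). wf S ar (Suc m) (snd p)) \<and> map (length \<circ> fst) (graftl c env as ds) = map (length \<circ> fst) as"
proof (induction c env u d and c env as ds arbitrary: m and m rule: graft_graftl.induct)
  case (1 c env d)
  then have "m = 0" by (cases m) auto
  have "wf S ar (Suc 0) (gen c env d)" by (rule gen_wf(1)) (use 1 \<open>m = 0\<close> in simp)
  then show ?case using \<open>m = 0\<close> by simp
next
  case (2 c env x d) then show ?case by (cases m) auto
next
  case (3 c env s as s' ds)
  then obtain m' where m: "m = Suc m'" by (cases m) auto
  have "(\<forall>p\<in>set (graftl c env as ds). wf S ar (Suc m') (snd p)) \<and> map (length \<circ> fst) (graftl c env as ds) = map (length \<circ> fst) as"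
    using 3 m by (intro 3(1)) auto
  then show ?case using 3(2) m by auto
next
  case ("4_1" c env s as) then show ?case by (cases m) auto
next
  case ("4_2" c env s as x) then show ?case by (cases m) auto
next
  case ("4_3" c env s as x) then show ?case by (cases m) auto
next
  case (5 c env p as q ds)
  have h: "wf S ar (Suc m) (graft c (rev (fst p) @ env) (snd p) (snd q))"
    using 5 by (intro 5(1)) auto
  have t: "(\<forall>p\<in>set (graftl (c + nbd (snd q)) env as ds). wf S ar (Suc m) (snd p)) \<and> map (length \<circ> fst) (graftl (c + nbd (snd q)) env as ds) = map (length \<circ> fst) as"
    using 5 by (intro 5(2)) auto
  show ?case using h t by (simp add: comp_def)
qed auto


definition bl :: "(nat list \<times> 'o rtm) list \<Rightarrow> nat list" where
  "bl as = concat (map (\<lambda>p. fst p @ binders (snd p)) as)"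

lemma bl_simps[simp]: "bl [] = []" "bl (p # as) = fst p @ binders (snd p) @ bl as"
  "binders (Op s as) = bl as"
  by (auto simp: bl_def)

declare binders.simps(1)[simp del]

lemma graft_db:
  fixes u :: "'o rtm" and d :: "'o dtm" and as :: "(nat list \<times> 'o rtm) list" and ds :: "(nat \<times> 'o dtm) list"
  shows "wf S ar m u \<Longrightarrow> dtrunc m d = db env u \<Longrightarrow> distinct env \<Longrightarrow> distinct (binders u) \<Longrightarrow>
    set (binders u) \<inter> set env = {} \<Longrightarrow> frees d \<inter> (set env \<union> set (binders u)) = {} \<Longrightarrow>
    (\<forall>x\<in>set env \<union> set (binders u) \<union> frees d. x < c) \<Longrightarrow> bndok (length env) d \<Longrightarrow>
    db env (graft c env u d) = d"
  and "(\<forall>p\<in>set as. wf S ar m (snd p)) \<Longrightarrow>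
    map (\<lambda>p. (length (fst p), db (rev (fst p) @ env) (snd p))) as = map (\<lambda>q. (fst q, dtrunc m (snd q))) ds \<Longrightarrow>
    distinct env \<Longrightarrow> distinct (bl as) \<Longrightarrow> set (bl as) \<inter> set env = {} \<Longrightarrow>
    (\<Union>q\<in>set ds. frees (snd q)) \<inter> (set env \<union> set (bl as)) = {} \<Longrightarrow>
    (\<forall>x\<in>set env \<union> set (bl as) \<union> (\<Union>q\<in>set ds. frees (snd q)). x < c) \<Longrightarrow>
    (\<forall>q\<in>set ds. bndok (length env + fst q) (snd q)) \<Longrightarrow>
    map (\<lambda>p. (length (fst p), db (rev (fst p) @ env) (snd p))) (graftl c env as ds) = ds"
proof (induction c env u d and c env as ds arbitrary: m and m rule: graft_graftl.induct)
  case (1 c env d)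
  have "db env (gen c env d) = d" by (rule gen_db(1)) (use 1 in auto)
  then show ?case by simp
next
  case (2 c env x d) then show ?case by (cases m; cases d) (auto split: option.splits)
next
  case (3 c env s as s' ds)
  then obtain m' where m: "m = Suc m'" by (cases m) auto
  have "map (\<lambda>p. (length (fst p), db (rev (fst p) @ env) (snd p))) (graftl c env as ds) = ds"
    using 3 m by (intro 3(1)) auto
  then show ?case using 3(3) m by auto
next
  case ("4_1" c env s as) then show ?case by (cases m) auto
next
  case ("4_2" c env s as x) then show ?case by (cases m) auto
next
  case ("4_3" c env s as x) then show ?case by (cases m) auto
next
  case (5 c env p as q ds)
  have q: "fst q = length (fst p)" "dtrunc m (snd q) = db (rev (fst p) @ env) (snd p)"
    using 5(4) by auto
  have h: "db (rev (fst p) @ env) (graft c (rev (fst p) @ env) (snd p) (snd q)) = snd q"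
  proof (rule 5(1))
    show "wf S ar m (snd p)" using 5(3) by simp
    show "dtrunc m (snd q) = db (rev (fst p) @ env) (snd p)" using q by simp
    show "distinct (rev (fst p) @ env)" using 5(5,6,7) by auto
    show "distinct (binders (snd p))" using 5(6) by simp
    show "set (binders (snd p)) \<inter> set (rev (fst p) @ env) = {}" using 5(6,7) by auto
    show "frees (snd q) \<inter> (set (rev (fst p) @ env) \<union> set (binders (snd p))) = {}" using 5(8) by auto
    show "\<forall>x\<in>set (rev (fst p) @ env) \<union> set (binders (snd p)) \<union> frees (snd q). x < c" using 5(9) by auto
    show "bndok (length (rev (fst p) @ env)) (snd q)" using 5(10) q by (simp add: add.commute)
  qed
  have t: "map (\<lambda>p. (length (fst p), db (rev (fst p) @ env) (snd p))) (graftl (c + nbd (snd q)) env as ds) = ds"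
  proof (rule 5(2))
    show "\<forall>p\<in>set as. wf S ar m (snd p)" using 5(3) by simp
    show "map (\<lambda>p. (length (fst p), db (rev (fst p) @ env) (snd p))) as = map (\<lambda>q. (fst q, dtrunc m (snd q))) ds"
      using 5(4) by simp
    show "distinct env" by (rule 5(5))
    show "distinct (bl as)" using 5(6) by simp
    show "set (bl as) \<inter> set env = {}" using 5(7) by auto
    show "(\<Union>q\<in>set ds. frees (snd q)) \<inter> (set env \<union> set (bl as)) = {}" using 5(8) by auto
    show "\<forall>x\<in>set env \<union> set (bl as) \<union> (\<Union>q\<in>set ds. frees (snd q)). x < c + nbd (snd q)"
    proof
      fix x assume "x \<in> set env \<union> set (bl as) \<union> (\<Union>q\<in>set ds. frees (snd q))"
      then have "x < c" using 5(9) by auto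
      then show "x < c + nbd (snd q)" by simp
    qed
    show "\<forall>q\<in>set ds. bndok (length env + fst q) (snd q)" using 5(10) by simp
  qed
  show ?case using h t q by (simp add: prod_eq_iff)
next
  case ("6_1" c env ds) then show ?case by simp
next
  case ("6_2" c env v va) then show ?case by simp
qed

lemma graft_binders:
  fixes u :: "'o rtm" and d :: "'o dtm" and as :: "(nat list \<times> 'o rtm) list" and ds :: "(nat \<times> 'o dtm) list"
  shows "distinct (binders u) \<Longrightarrow> (\<forall>x\<in>set (binders u). x < c) \<Longrightarrow>
    distinct (binders (graft c env u d)) \<and> set (binders (graft c env u d)) \<subseteq> set (binders u) \<union> {c..<c + nbd d}"
  and "distinct (bl as) \<Longrightarrow> (\<forall>x\<in>set (bl as). x < c) \<Longrightarrow>
    distinct (bl (graftl c env as ds)) \<and> set (bl (graftl c env as ds)) \<subseteq> set (bl as) \<union> {c..<c + sum_list (map (\<lambda>q. nbd (snd q)) ds)}"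
proof (induction c env u d and c env as ds rule: graft_graftl.induct)
  case (1 c env d) then show ?case by (simp add: gen_binders(1))
next
  case (3 c env s as s' ds)
  have "distinct (bl (graftl c env as ds)) \<and> set (bl (graftl c env as ds)) \<subseteq> set (bl as) \<union> {c..<c + sum_list (map (\<lambda>q. nbd (snd q)) ds)}"
    using 3 by (intro 3(1)) auto
  moreover have "sum_list (map (\<lambda>q. nbd (snd q)) ds) \<le> nbd (DOp s' ds)"
    by (simp add: sum_list_mono)
  then have "{c..<c + sum_list (map (\<lambda>q. nbd (snd q)) ds)} \<subseteq> {c..<c + nbd (DOp s' ds)}" by auto
  ultimately show ?case by auto
next
  case (5 c env p as q ds)
  have h: "distinct (binders (graft c (rev (fst p) @ env) (snd p) (snd q))) \<and>
     set (binders (graft c (rev (fst p) @ env) (snd p) (snd q))) \<subseteq> set (binders (snd p)) \<union> {c..<c + nbd (snd q)}"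
    using 5(3,4) by (intro 5(1)) auto
  have t: "distinct (bl (graftl (c + nbd (snd q)) env as ds)) \<and> set (bl (graftl (c + nbd (snd q)) env as ds))
     \<subseteq> set (bl as) \<union> {c + nbd (snd q)..<c + nbd (snd q) + sum_list (map (\<lambda>q. nbd (snd q)) ds)}"
    using 5(3,4) by (intro 5(2)) (auto simp: trans_less_add1)
  have d: "distinct (fst p)" "distinct (binders (snd p))" "distinct (bl as)"
    "set (fst p) \<inter> set (binders (snd p)) = {}" "set (fst p) \<inter> set (bl as) = {}" "set (binders (snd p)) \<inter> set (bl as) = {}"
    using 5(3) by auto
  have lt: "\<forall>x\<in>set (fst p) \<union> set (binders (snd p)) \<union> set (bl as). x < c" using 5(4) by auto
  let ?B = "binders (graft c (rev (fst p) @ env) (snd p) (snd q))"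
  let ?R = "bl (graftl (c + nbd (snd q)) env as ds)"
  have s1: "set (fst p) \<inter> set ?B = {}"
  proof (intro equals0I)
    fix x assume x: "x \<in> set (fst p) \<inter> set ?B"
    then have "x < c" using lt by auto
    moreover have "x \<in> set (binders (snd p)) \<or> x \<in> {c..<c + nbd (snd q)}" using x h by blast
    ultimately show False using x d(4) by auto
  qed
  have s2: "(set (fst p) \<union> set ?B) \<inter> set ?R = {}"
  proof (intro equals0I)
    fix x assume x: "x \<in> (set (fst p) \<union> set ?B) \<inter> set ?R"
    have xr: "x \<in> set (bl as) \<or> x \<in> {c + nbd (snd q)..<c + nbd (snd q) + sum_list (map (\<lambda>q. nbd (snd q)) ds)}"
      using x t by blast
    have xl: "x \<in> set (fst p) \<or> x \<in> set (binders (snd p)) \<or> x \<in> {c..<c + nbd (snd q)}"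
      using x h by blast
    show False
    proof (cases "x \<in> set (bl as)")
      case True
      then have "x < c" using lt by auto
      then show False using xl True d(5,6) by auto
    next
      case False
      then have "x \<ge> c + nbd (snd q)" using xr by auto
      moreover have "x \<in> set (fst p) \<union> set (binders (snd p)) \<longrightarrow> x < c" using lt by blast
      then have "x < c + nbd (snd q)" using xl by auto
      ultimately show False by simp
    qed
  qed
  have s2a: "set (fst p) \<inter> set ?R = {}" and s2b: "set ?B \<inter> set ?R = {}" using s2 by blast+
  have "distinct (fst p @ ?B @ ?R)" using h t d(1) s1 s2a s2b by (simp add: Int_Un_distrib)
  moreover
  have iv: "{c..<c + nbd (snd q)} \<union> {c + nbd (snd q)..<c + nbd (snd q) + sum_list (map (\<lambda>q. nbd (snd q)) ds)}
     \<subseteq> {c..<c + sum_list (map (\<lambda>q. nbd (snd q)) (q # ds))}" by auto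
  have "set (fst p @ ?B @ ?R) \<subseteq> set (fst p @ binders (snd p) @ bl as) \<union> {c..<c + sum_list (map (\<lambda>q. nbd (snd q)) (q # ds))}"
    using h t iv by auto
  ultimately show ?case by simp
qed auto

lemma bound_exists: "finite (F :: nat set) \<Longrightarrow> \<exists>c. \<forall>x\<in>F. x < c"
  using finite_nat_set_iff_bounded by blast

lemma gen_rep: "wf S ar n u \<Longrightarrow> \<exists>w. wf S ar n w \<and> db [] w = db [] u \<and>
   card (names w) = card (frees (db [] u)) + nbd (db [] u)"
proof -
  assume u: "wf S ar n u"
  let ?d = "db [] u"
  obtain c where c: "\<forall>x\<in>frees ?d. x < c" using bound_exists[OF frees_finite] by blast
  define w where "w = gen c [] ?d"
  have w1: "wf S ar n w" unfolding w_def by (rule gen_wf(1)[OF wf_wfD[OF u]])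
  have w2: "db [] w = ?d" unfolding w_def
    by (rule gen_db(1)) (use c bndok_db[of "[]" u] in auto)
  have b: "binders w = [c..<c + nbd ?d]" unfolding w_def by (rule gen_binders(1))
  have "card (names w) = card (frees (db [] w)) + nbd (db [] w)"
  proof (rule good_card)
    show "distinct (binders w)" using b by simp
    show "set (binders w) \<inter> frees (db [] w) = {}" using b w2 c by auto
  qed
  then show ?thesis using w1 w2 by auto
qed

lemma safe_good: "safe (Fset S ar n) rsupp (acls S ar n) u \<Longrightarrow>
   distinct (binders u) \<and> set (binders u) \<inter> frees (db [] u) = {}"
proof -
  assume s: "safe (Fset S ar n) rsupp (acls S ar n) u"
  then have u: "wf S ar n u" by (simp add: safe_def Fset_def)
  obtain w where w: "wf S ar n w" "db [] w = db [] u" "card (names w) = card (frees (db [] u)) + nbd (db [] u)"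
    using gen_rep[OF u] by blast
  have "acls S ar n w = acls S ar n u" using acls_iff[OF w(1) u] w(2) by simp
  then have "card (rsupp w) \<le> card (rsupp u)" using s w(1) unfolding safe_def Fset_def by auto
  then show ?thesis using w(3) card_good[of u] by (simp add: rsupp_names)
qed

lemma good_safe: "wf S ar m z \<Longrightarrow> distinct (binders z) \<Longrightarrow> set (binders z) \<inter> frees (db [] z) = {} \<Longrightarrow>
   safe (Fset S ar m) rsupp (acls S ar m) z"
proof -
  assume z: "wf S ar m z" and g: "distinct (binders z)" "set (binders z) \<inter> frees (db [] z) = {}"
  have cz: "card (names z) = card (frees (db [] z)) + nbd (db [] z)" using good_card[OF g] .
  have "card (rsupp v) \<le> card (rsupp z)" if v: "v \<in> Fset S ar m" "acls S ar m v = acls S ar m z" for v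
  proof -
    have "wf S ar m v" using v by (simp add: Fset_def)
    then have "db [] v = db [] z" using acls_iff[OF _ z] v(2) by blast
    then show ?thesis using card_bound[of v] cz by (simp add: rsupp_names)
  qed
  then show ?thesis using z unfolding safe_def Fset_def by auto
qed

theorem proposition5p46:
  fixes Sig :: "'o set" and ar :: "'o \<Rightarrow> nat list" and n :: nat
  assumes "countable Sig"
  shows "safe_square (Fset Sig ar (Suc n)) (Fset Sig ar n) (Faset Sig ar (Suc n)) (Faset Sig ar n)
           rsupp rsupp csupp csupp
           (trunc n) (acls Sig ar n) (acls Sig ar (Suc n)) (bangA Sig ar n)"
  unfolding safe_square_def
proof (rule conjI)
  show "\<forall>z\<in>Fset Sig ar (Suc n). trunc n z \<in> Fset Sig ar n \<and> acls Sig ar (Suc n) z \<in> Faset Sig ar (Suc n) \<and>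
        acls Sig ar n (trunc n z) = bangA Sig ar n (acls Sig ar (Suc n) z)"
  proof
    fix z assume "z \<in> Fset Sig ar (Suc n)"
    then have z: "wf Sig ar (Suc n) z" by (simp add: Fset_def)
    show "trunc n z \<in> Fset Sig ar n \<and> acls Sig ar (Suc n) z \<in> Faset Sig ar (Suc n) \<and>
        acls Sig ar n (trunc n z) = bangA Sig ar n (acls Sig ar (Suc n) z)"
      using z wf_trunc[OF z] bangA_acls[OF z] by (auto simp: Fset_def Faset_def)
  qed
next
  show "\<forall>u\<in>Fset Sig ar n. \<forall>v\<in>Faset Sig ar (Suc n). safe (Fset Sig ar n) rsupp (acls Sig ar n) u \<and> acls Sig ar n u = bangA Sig ar n v \<and>
        (rsupp u - csupp (acls Sig ar n u)) \<inter> csupp v = {} \<longrightarrow>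
      (\<exists>z\<in>Fset Sig ar (Suc n). safe (Fset Sig ar (Suc n)) rsupp (acls Sig ar (Suc n)) z \<and> trunc n z = u \<and> acls Sig ar (Suc n) z = v)"
  proof (intro ballI impI)
  fix u v
  assume u0: "u \<in> Fset Sig ar n" and v0: "v \<in> Faset Sig ar (Suc n)"
    and h: "safe (Fset Sig ar n) rsupp (acls Sig ar n) u \<and> acls Sig ar n u = bangA Sig ar n v \<and>
        (rsupp u - csupp (acls Sig ar n u)) \<inter> csupp v = {}"
  have u: "wf Sig ar n u" using u0 by (simp add: Fset_def)
  obtain t0 where t0: "wf Sig ar (Suc n) t0" and v: "v = acls Sig ar (Suc n) t0"
    using v0 by (auto simp: Faset_def Fset_def)
  define d where "d = db [] t0"
  have "acls Sig ar n u = acls Sig ar n (trunc n t0)" using h bangA_acls[OF t0] v by simp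
  then have du: "db [] u = dtrunc n d"
    using acls_iff[OF u wf_trunc[OF t0]] by (simp add: db_trunc d_def)
  have g: "distinct (binders u)" "set (binders u) \<inter> frees (db [] u) = {}"
    using safe_good h by blast+
  have cs: "csupp (acls Sig ar n u) = frees (db [] u)" "csupp v = frees d"
    using csupp_acls[OF u] csupp_acls[OF t0] v d_def by auto
  have bd: "set (binders u) \<inter> frees d = {}"
  proof -
    have "set (binders u) \<subseteq> rsupp u - csupp (acls Sig ar n u)"
      using g(2) cs(1) binders_sub[of u] by (auto simp: rsupp_names)
    then show ?thesis using h cs(2) by blast
  qed
  obtain c where c: "\<forall>x\<in>names u \<union> frees d. x < c" using bound_exists[of "names u \<union> frees d"] by auto
  define z where "z = graft c [] u d"
  have z1: "trunc n z = u" unfolding z_def by (rule graft_trunc(1)[OF u]) (simp add: du)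
  have z2: "wf Sig ar (Suc n) z" unfolding z_def
    by (rule graft_wf(1)[OF u]) (use wf_wfD[OF t0] d_def du in auto)
  have z3: "db [] z = d" unfolding z_def
  proof (rule graft_db(1)[OF u])
    show "dtrunc n d = db [] u" using du by simp
    show "distinct []" by simp
    show "distinct (binders u)" by (rule g(1))
    show "set (binders u) \<inter> set [] = {}" by simp
    show "frees d \<inter> (set [] \<union> set (binders u)) = {}" using bd by auto
    show "\<forall>x\<in>set [] \<union> set (binders u) \<union> frees d. x < c" using c binders_sub[of u] by auto
    show "bndok (length []) d" using bndok_db[of "[]" t0] d_def by simp
  qed
  have zb: "distinct (binders z) \<and> set (binders z) \<subseteq> set (binders u) \<union> {c..<c + nbd d}"
    unfolding z_def by (rule graft_binders(1)[OF g(1)]) (use c binders_sub[of u] in auto)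
  have zg: "set (binders z) \<inter> frees (db [] z) = {}"
  proof -
    have "set (binders u) \<inter> frees d = {}" by (rule bd)
    moreover have "{c..<c + nbd d} \<inter> frees d = {}"
    proof (intro equals0I)
      fix x assume x: "x \<in> {c..<c + nbd d} \<inter> frees d"
      then have "x < c" using c by blast
      then show False using x by auto
    qed
    ultimately show ?thesis using zb z3 by blast
  qed
  have zs: "safe (Fset Sig ar (Suc n)) rsupp (acls Sig ar (Suc n)) z"
    using good_safe[OF z2] zb zg by blast
  have zv: "acls Sig ar (Suc n) z = v" using acls_iff[OF z2 t0] z3 d_def v by simp
  show "\<exists>z\<in>Fset Sig ar (Suc n). safe (Fset Sig ar (Suc n)) rsupp (acls Sig ar (Suc n)) z \<and> trunc n z = u \<and> acls Sig ar (Suc n) z = v"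
    using z2 zs z1 zv by (auto simp: Fset_def)
  qed
qed

end
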